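(* Let $a,b\geq 1$ and $m,n,p,q>1$ be integers. The graph $aH_{m,p}\circ bH_{n,q}$ is distance magic if and only if $n\equiv 0\pmod 2$ or $mnabpq\equiv 1\pmod 2$.
   Context: A graph $G$ on $v$ vertices is distance magic if there is a bijection $f:V(G)\to\{1,\ldots,v\}$ and a constant $k$ such that for every vertex $x$, $\sum_{y\in N(x)}f(y)=k$, where $N(x)$ is the set of neighbours of $x$. $H_{n,p}$ denotes the complete multipartite graph with $p$ partite sets each of size $n$; $aH$ denotes the disjoint union of $a$ copies of $H$. The lexicographic product $G\circ H$ has vertex set $V(G)\times V(H)$, with $(g,h)$ adjacent to $(g',h')$ iff either $gg'\in E(G)$, or $g=g'$ and $hh'\in E(H)$. *)

theory Defs
  imports Main
begin

text \<open>A graph is given by a finite vertex set V and an adjacency relation E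
(only adjacencies between vertices of V matter). Neighbourhood of x: vertices y in V with E x y.\<close>

definition nbhd :: "'a set \<Rightarrow> ('a \<Rightarrow> 'a \<Rightarrow> bool) \<Rightarrow> 'a \<Rightarrow> 'a set" where
  "nbhd V E x = {y \<in> V. E x y}"

definition distance_magic :: "'a set \<Rightarrow> ('a \<Rightarrow> 'a \<Rightarrow> bool) \<Rightarrow> bool" where
  "distance_magic V E \<longleftrightarrow>
     (\<exists>(f :: 'a \<Rightarrow> nat) k. bij_betw f V {1..card V} \<and>
        (\<forall>x\<in>V. (\<Sum>y\<in>nbhd V E x. f y) = k))"

text \<open>Complete multipartite graph H_{n,p}: p partite sets of size n.
  Vertex (j,i): part j < p, index i < n. Adjacent iff in different parts.\<close>
definition Hverts :: "nat \<Rightarrow> nat \<Rightarrow> (nat \<times> nat) set" where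
  "Hverts n p = {0..<p} \<times> {0..<n}"

definition Hedge :: "(nat \<times> nat) \<Rightarrow> (nat \<times> nat) \<Rightarrow> bool" where
  "Hedge u v \<longleftrightarrow> fst u \<noteq> fst v"

definition copies_verts :: "nat \<Rightarrow> 'a set \<Rightarrow> (nat \<times> 'a) set" where
  "copies_verts a V = {0..<a} \<times> V"

definition copies_edge :: "('a \<Rightarrow> 'a \<Rightarrow> bool) \<Rightarrow> (nat \<times> 'a) \<Rightarrow> (nat \<times> 'a) \<Rightarrow> bool" where
  "copies_edge E u v \<longleftrightarrow> fst u = fst v \<and> E (snd u) (snd v)"

definition lex_verts :: "'a set \<Rightarrow> 'b set \<Rightarrow> ('a \<times> 'b) set" where
  "lex_verts VG VH = VG \<times> VH"

definition lex_edge :: "('a \<Rightarrow> 'a \<Rightarrow> bool) \<Rightarrow> ('b \<Rightarrow> 'b \<Rightarrow> bool) \<Rightarrow> ('a \<times> 'b) \<Rightarrow> ('a \<times> 'b) \<Rightarrow> bool" where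
  "lex_edge EG EH u v \<longleftrightarrow> EG (fst u) (fst v) \<or> (fst u = fst v \<and> EH (snd u) (snd v))"

end

theory Submission
  imports Defs
begin

definition blk :: "(((nat\<times>nat\<times>nat)\<times>(nat\<times>nat\<times>nat)) \<Rightarrow> nat) \<Rightarrow> nat \<Rightarrow> nat\<times>nat\<times>nat \<Rightarrow> nat \<Rightarrow> nat \<Rightarrow> nat" where
  "blk f n g d k = (\<Sum>l<n. f (g,(d,k,l)))"

lemma sum_times: "finite A \<Longrightarrow> finite B \<Longrightarrow> (\<Sum>y\<in>A\<times>B. f y) = (\<Sum>x\<in>A. \<Sum>z\<in>B. f (x,z))"
  by (simp add: sum.cartesian_product)

lemma nbhd_eq:
  assumes "c<a" "j<p" "i<m" "d<b" "k<q" "l<n"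
  shows "nbhd (lex_verts (copies_verts a (Hverts m p)) (copies_verts b (Hverts n q)))
           (lex_edge (copies_edge Hedge) (copies_edge Hedge)) ((c,j,i),(d,k,l)) =
    ({c} \<times> (({..<p}-{j}) \<times> {..<m})) \<times> ({..<b} \<times> ({..<q} \<times> {..<n})) \<union>
    {(c,j,i)} \<times> ({d} \<times> (({..<q}-{k}) \<times> {..<n}))"
  unfolding nbhd_def lex_verts_def copies_verts_def Hverts_def lex_edge_def copies_edge_def Hedge_def
  using assms by auto

lemma nbhd_sum:
  assumes "c<a" "j<p" "i<m" "d<b" "k<q" "l<n"
  shows "(\<Sum>y\<in>nbhd (lex_verts (copies_verts a (Hverts m p)) (copies_verts b (Hverts n q)))
           (lex_edge (copies_edge Hedge) (copies_edge Hedge)) ((c,j,i),(d,k,l)). f y) =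
    (\<Sum>j'\<in>{..<p}-{j}. \<Sum>i'<m. \<Sum>d'<b. \<Sum>k'<q. blk f n (c,j',i') d' k') +
    (\<Sum>k'\<in>{..<q}-{k}. blk f n (c,j,i) d k')"
proof -
  have disj: "(({c} \<times> (({..<p}-{j}) \<times> {..<m})) \<times> ({..<b} \<times> ({..<q} \<times> {..<n}))) \<inter>
    ({(c,j,i)} \<times> ({d} \<times> (({..<q}-{k}) \<times> {..<n}))) = {}" by auto
  show ?thesis
    unfolding nbhd_eq[OF assms]
    by (simp add: sum.union_disjoint[OF _ _ disj] sum_times blk_def)
qed


definition good :: "nat \<Rightarrow> nat \<Rightarrow> (nat \<Rightarrow> nat \<Rightarrow> nat) \<Rightarrow> bool" where
  "good A n F \<longleftrightarrow> inj_on (\<lambda>(t,l). F t l) ({..<A}\<times>{..<n}) \<and> (\<forall>t<A. \<forall>l<n. F t l < A*n)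
     \<and> (\<exists>c. \<forall>t<A. (\<Sum>l<n. F t l) = c)"

lemma good_0: "good A 0 (\<lambda>t l. 0)"
  unfolding good_def by auto

lemma good_step:
  assumes "good A n F"
  shows "good A (n+2) (\<lambda>t l. if l < n then F t l + A else if l = n then t else A*(n+2) - 1 - t)"
proof -
  from assms obtain c where inj: "inj_on (\<lambda>(t,l). F t l) ({..<A}\<times>{..<n})"
    and rng: "\<forall>t<A. \<forall>l<n. F t l < A*n" and sc: "\<forall>t<A. (\<Sum>l<n. F t l) = c"
    unfolding good_def by blast
  let ?G = "\<lambda>t l. if l < n then F t l + A else if l = n then t else A*(n+2) - 1 - t"
  have r2: "\<forall>t<A. \<forall>l<n+2. ?G t l < A*(n+2)"
  proof (intro allI impI)
    fix t l assume "t<A" "l<n+2"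
    show "?G t l < A*(n+2)"
    proof (cases "l<n")
      case True
      with rng \<open>t<A\<close> have "F t l < A*n" by blast
      then show ?thesis using True by (simp add: algebra_simps)
    next
      case False
      then show ?thesis using \<open>t<A\<close> \<open>l<n+2\<close> by (auto simp: algebra_simps)
    qed
  qed
  have i2: "inj_on (\<lambda>(t,l). ?G t l) ({..<A}\<times>{..<n+2})"
  proof (rule inj_onI, clarify)
    fix t l t' l' assume a: "t<A" "l<n+2" "t'<A" "l'<n+2" and e: "?G t l = ?G t' l'"
    have lo: "\<And>t l. t<A \<Longrightarrow> l<n \<Longrightarrow> F t l + A < A*(n+1)"
      using rng by (auto simp: algebra_simps)
    have hi: "A*(n+1) \<le> A*(n+2) - 1 - t" if "t<A" for t
      using that by (simp add: algebra_simps)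
    have hi2: "A*(n+2) - 1 - t = A*(n+2) - 1 - t' \<Longrightarrow> t<A \<Longrightarrow> t'<A \<Longrightarrow> t=t'" for t t'
      by (cases A) (auto simp: algebra_simps)
    show "t = t' \<and> l = l'"
    proof (cases "l<n")
      case True
      show ?thesis
      proof (cases "l'<n")
        case True
        with \<open>l<n\<close> e have "F t l = F t' l'" by simp
        have "(t,l) = (t',l')"
          using inj_onD[OF inj, of "(t,l)" "(t',l')"] \<open>F t l = F t' l'\<close> a True \<open>l<n\<close> by auto
        then show ?thesis by simp
      next
        case False
        have "F t l + A \<ge> A" by simp
        then show ?thesis using lo[OF a(1) True] hi[OF a(3)] e True False a by (auto split: if_splits)
      qed
    next
      case False
      show ?thesis
      proof (cases "l'<n")
        case True
        then show ?thesis using lo[OF a(3) True] hi[OF a(1)] e a False by (auto split: if_splits)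
      next
        case False2: False
        then show ?thesis using hi[OF a(3)] hi[OF a(1)] e a False hi2[of t t']
          by (auto split: if_splits)
      qed
    qed
  qed
  have s2: "\<forall>t<A. (\<Sum>l<n+2. ?G t l) = c + A*n + A*(n+2) - 1"
  proof (intro allI impI)
    fix t assume "t<A"
    have "(\<Sum>l<n. ?G t l) = (\<Sum>l<n. F t l) + A*n" by (simp add: sum.distrib)
    then show "(\<Sum>l<n+2. ?G t l) = c + A*n + A*(n+2) - 1"
      using sc \<open>t<A\<close> by (simp add: algebra_simps)
  qed
  show ?thesis unfolding good_def using i2 r2 s2 by blast
qed

lemma good_3:
  assumes A: "A = 2*s+1"
  shows "good A 3 (\<lambda>(t::nat) (l::nat). if l=0 then t else if l=1 then A + (if t \<le> s then t+s else t-s-1)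
                     else 2*A + (if t \<le> s then 2*s-2*t else 4*s+1-2*t))"
proof -
  let ?G = "\<lambda>(t::nat) (l::nat). if l=0 then t else if l=1 then A + (if t \<le> s then t+s else t-s-1)
                     else 2*A + (if t \<le> s then 2*s-2*t else 4*s+1-2*t)"
  have i: "inj_on (\<lambda>(t,l). ?G t l) ({..<A}\<times>{..<3})"
  proof (rule inj_onI, clarify)
    fix t l t' l' :: nat assume "t<A" "l<3" "t'<A" "l'<3" "?G t l = ?G t' l'"
    then show "t = t' \<and> l = l'" using A by (auto split: if_splits; presburger)
  qed
  have r: "\<forall>t<A. \<forall>l<3. ?G t l < A*3"
    using A by (auto split: if_splits)
  have sm: "\<forall>t<A. (\<Sum>l<3. ?G t l) = 3*A + 3*s"
  proof (intro allI impI)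
    fix t assume "t<A"
    have "(\<Sum>l<3. ?G t l) = ?G t 0 + ?G t 1 + ?G t 2"
      by (simp add: numeral_3_eq_3)
    also have "\<dots> = 3*A + 3*s" using \<open>t<A\<close> A by auto
    finally show "(\<Sum>l<3. ?G t l) = 3*A + 3*s" .
  qed
  show ?thesis unfolding good_def using i r sm by blast
qed

lemma good_exists:
  assumes "2 \<le> n" "even n \<or> odd A"
  shows "\<exists>F. good A n F"
proof (cases "even n")
  case True
  then obtain u where n: "n = 2*u" by blast
  have "\<exists>F. good A (2*u) F"
  proof (induction u)
    case 0 then show ?case using good_0 by auto
  next
    case (Suc u)
    then obtain F where "good A (2*u) F" by blast
    from good_step[OF this] show ?case by (auto simp: algebra_simps)
  qed
  then show ?thesis using n by simp
next
  case False
  with assms have oA: "odd A" by simp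
  then obtain s where A: "A = 2*s+1" by (metis oddE)
  define u where "u = (n - 3) div 2"
  have n: "n = 2*u + 3" using False assms(1) unfolding u_def by presburger
  have "\<exists>F. good A (2*u+3) F"
  proof (induction u)
    case 0 then show ?case using good_3[OF A] by auto
  next
    case (Suc u)
    then obtain F where "good A (2*u+3) F" by blast
    from good_step[OF this] show ?case by (auto simp: algebra_simps)
  qed
  then show ?thesis using n by simp
qed


lemma bij_from_inj:
  "inj_on f A \<Longrightarrow> f ` A \<subseteq> B \<Longrightarrow> card A = card B \<Longrightarrow> finite B \<Longrightarrow> bij_betw f A B"
  by (simp add: bij_betw_def card_subset_eq card_image)

lemma lin_eq:
  fixes X Y x y c1 c2 :: nat
  assumes "c1 \<noteq> c2" "X + c1*x = Y + c2*x" "X + c1*y = Y + c2*y"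
  shows "x = y"
proof -
  have e1: "int X + int c1 * int x = int Y + int c2 * int x"
    using arg_cong[OF assms(2), of int] by simp
  have e2: "int X + int c1 * int y = int Y + int c2 * int y"
    using arg_cong[OF assms(3), of int] by simp
  have "(int c1 - int c2) * (int x - int y) = (int c1 * int x - int c2 * int x) - (int c1 * int y - int c2 * int y)"
    by (simp add: algebra_simps)
  also have "\<dots> = 0" using e1 e2 by linarith
  finally have "(int c1 - int c2) * (int x - int y) = 0" .
  then show ?thesis using assms(1) by simp
qed

lemma V_eq: "lex_verts (copies_verts a (Hverts m p)) (copies_verts b (Hverts n q)) =
   ({..<a} \<times> ({..<p} \<times> {..<m})) \<times> ({..<b} \<times> ({..<q} \<times> {..<n}))"
  unfolding lex_verts_def copies_verts_def Hverts_def by (simp add: atLeast0LessThan)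

lemma suff:
  assumes "even n \<or> odd (a*p*m*b*q)" "2 \<le> n"
  shows "distance_magic (lex_verts (copies_verts a (Hverts m p)) (copies_verts b (Hverts n q)))
           (lex_edge (copies_edge Hedge) (copies_edge Hedge))"
proof -
  let ?V = "lex_verts (copies_verts a (Hverts m p)) (copies_verts b (Hverts n q))"
  let ?E = "lex_edge (copies_edge Hedge) (copies_edge Hedge)"
  let ?A = "a*p*m*b*q"
  obtain F where gF: "good ?A n F" using good_exists assms by blast
  then obtain c0 where injF: "inj_on (\<lambda>(t,l). F t l) ({..<?A}\<times>{..<n})"
    and rF: "\<forall>t<?A. \<forall>l<n. F t l < ?A*n" and sF: "\<forall>t<?A. (\<Sum>l<n. F t l) = c0"
    unfolding good_def by blast
  let ?B = "({..<a} \<times> ({..<p} \<times> {..<m})) \<times> ({..<b} \<times> {..<q})"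
  have cB: "card ?B = ?A" by (simp add: card_cartesian_product)
  obtain \<beta> where bB: "bij_betw \<beta> ?B {..<?A}"
    using ex_bij_betw_finite_nat[of ?B] cB by (auto simp: atLeast0LessThan)
  define f :: "((nat\<times>nat\<times>nat)\<times>(nat\<times>nat\<times>nat)) \<Rightarrow> nat"
    where "f = (\<lambda>(g,(d,k,l)). F (\<beta> (g,(d,k))) l + 1)"
  have cV: "card ?V = ?A * n" unfolding V_eq by (simp add: card_cartesian_product)
  have inj: "inj_on f ?V"
  proof (rule inj_onI)
    fix x y assume x: "x \<in> ?V" and y: "y \<in> ?V" and e: "f x = f y"
    obtain g d k l where xx: "x = (g,(d,k,l))" by (metis prod.exhaust)
    obtain g' d' k' l' where yy: "y = (g',(d',k',l'))" by (metis prod.exhaust)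
    have gx: "(g,(d,k)) \<in> ?B" "l < n" using x xx V_eq by auto
    have gy: "(g',(d',k')) \<in> ?B" "l' < n" using y yy V_eq by auto
    have bx: "\<beta> (g,(d,k)) < ?A" "\<beta> (g',(d',k')) < ?A"
      using bB gx gy by (auto simp: bij_betw_def)
    have "F (\<beta> (g,(d,k))) l = F (\<beta> (g',(d',k'))) l'" using e xx yy f_def by simp
    then have "(\<beta> (g,(d,k)), l) = (\<beta> (g',(d',k')), l')"
      using inj_onD[OF injF, of "(\<beta> (g,(d,k)), l)" "(\<beta> (g',(d',k')), l')"] bx gx gy by auto
    then have "\<beta> (g,(d,k)) = \<beta> (g',(d',k'))" "l = l'" by auto
    then have "(g,(d,k)) = (g',(d',k'))" using bB gx gy by (auto simp: bij_betw_def dest: inj_onD)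
    then show "x = y" using xx yy \<open>l = l'\<close> by simp
  qed
  have img: "f ` ?V \<subseteq> {1..card ?V}"
  proof
    fix z assume "z \<in> f ` ?V"
    then obtain g d k l where "(g,(d,k,l)) \<in> ?V" and z: "z = f (g,(d,k,l))" by auto
    then have gx: "(g,(d,k)) \<in> ?B" "l < n" using V_eq by auto
    have "\<beta> (g,(d,k)) < ?A" using bB gx by (auto simp: bij_betw_def)
    then have "F (\<beta> (g,(d,k))) l < ?A * n" using rF gx by blast
    then show "z \<in> {1..card ?V}" using z cV f_def by simp
  qed
  have bij: "bij_betw f ?V {1..card ?V}"
    by (rule bij_from_inj[OF inj img]) simp_all
  have blkc: "blk f n (c,j,i) d k = c0 + n" if "c<a" "j<p" "i<m" "d<b" "k<q" for c j i d k
  proof -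
    have "((c,j,i),(d,k)) \<in> ?B" using that by auto
    then have "\<beta> ((c,j,i),(d,k)) < ?A" using bB by (auto simp: bij_betw_def)
    then have "(\<Sum>l<n. F (\<beta> ((c,j,i),(d,k))) l) = c0" using sF by blast
    moreover have "blk f n (c,j,i) d k = (\<Sum>l<n. F (\<beta> ((c,j,i),(d,k))) l) + n"
      by (simp add: blk_def f_def sum.distrib del: add_Suc_right add_Suc plus_1_eq_Suc)
    ultimately show ?thesis by simp
  qed
  have magic: "\<forall>x\<in>?V. (\<Sum>y\<in>nbhd ?V ?E x. f y) = (p-1)*(m*(b*(q*(c0+n)))) + (q-1)*(c0+n)"
  proof
    fix x assume "x \<in> ?V"
    then obtain c j i d k l where xx: "x = ((c,j,i),(d,k,l))" and r: "c<a" "j<p" "i<m" "d<b" "k<q" "l<n"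
      unfolding V_eq by auto
    show "(\<Sum>y\<in>nbhd ?V ?E x. f y) = (p-1)*(m*(b*(q*(c0+n)))) + (q-1)*(c0+n)"
      unfolding xx nbhd_sum[OF r]
      using r by (simp add: blkc)
  qed
  show ?thesis unfolding distance_magic_def using bij magic by blast
qed

lemma nec:
  assumes "1<p" "1<q" "1<m" "a\<ge>1" "b\<ge>1"
    "distance_magic (lex_verts (copies_verts a (Hverts m p)) (copies_verts b (Hverts n q)))
           (lex_edge (copies_edge Hedge) (copies_edge Hedge))"
  shows "even n \<or> odd (a*p*m*b*q*n)"
proof (cases "n = 0")
  case True then show ?thesis by simp
next
  case False
  let ?V = "lex_verts (copies_verts a (Hverts m p)) (copies_verts b (Hverts n q))"
  let ?E = "lex_edge (copies_edge Hedge) (copies_edge Hedge)"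
  obtain f K where bij: "bij_betw f ?V {1..card ?V}"
    and mag: "\<forall>x\<in>?V. (\<Sum>y\<in>nbhd ?V ?E x. f y) = K"
    using assms(6) unfolding distance_magic_def by blast
  define R where "R = blk f n"
  define G1 where "G1 = (\<lambda>c j. \<Sum>i<m. \<Sum>d<b. \<Sum>k<q. R (c,j,i) d k)"
  define T where "T = (\<lambda>c. \<Sum>j<p. G1 c j)"
  define U where "U = (\<lambda>g d. \<Sum>k<q. R g d k)"
  have eq: "T c + U (c,j,i) d = K + G1 c j + R (c,j,i) d k"
    if r: "c<a" "j<p" "i<m" "d<b" "k<q" for c j i d k
  proof -
    have r0: "0 < n" using False by simp
    have "((c,j,i),(d,k,0)) \<in> ?V" using r r0 V_eq by auto
    then have "(\<Sum>j'\<in>{..<p}-{j}. G1 c j') + (\<Sum>k'\<in>{..<q}-{k}. R (c,j,i) d k') = K"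
      using mag nbhd_sum[OF r r0, of f] unfolding G1_def R_def by simp
    moreover have "T c = G1 c j + (\<Sum>j'\<in>{..<p}-{j}. G1 c j')"
      unfolding T_def using r by (simp add: sum.remove)
    moreover have "U (c,j,i) d = R (c,j,i) d k + (\<Sum>k'\<in>{..<q}-{k}. R (c,j,i) d k')"
      unfolding U_def using r by (simp add: sum.remove)
    ultimately show ?thesis by simp
  qed
  have s1: "R (c,j,i) d k = R (c,j,i) d 0"
    if r: "c<a" "j<p" "i<m" "d<b" "k<q" for c j i d k
    using eq[OF r] eq[OF r(1-4), of 0] r assms by simp
  have U1: "U (c,j,i) d = q * R (c,j,i) d 0"
    if r: "c<a" "j<p" "i<m" "d<b" for c j i d
  proof -
    have "U (c,j,i) d = (\<Sum>k<q. R (c,j,i) d 0)"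
      unfolding U_def by (rule sum.cong) (auto intro: s1[OF r])
    then show ?thesis by simp
  qed
  have s2: "R (c,j,i) d 0 = R (c,j,i) 0 0"
    if r: "c<a" "j<p" "i<m" "d<b" for c j i d
  proof -
    have "T c + q * R (c,j,i) d 0 = (K + G1 c j) + 1 * R (c,j,i) d 0"
      using eq[OF r, of 0] U1[OF r] assms by simp
    moreover have "T c + q * R (c,j,i) 0 0 = (K + G1 c j) + 1 * R (c,j,i) 0 0"
      using eq[OF r(1-3), of 0 0] U1[OF r(1-3), of 0] assms by simp
    ultimately show ?thesis using lin_eq[of q 1] assms by blast
  qed
  define \<rho> where "\<rho> = (\<lambda>g. R g 0 0)"
  have b0: "0<b" "0<q" "0<m" "0<p" "q \<noteq> 1" using assms by auto
  have Rr: "R (c,j,i) d k = \<rho> (c,j,i)"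
    if r: "c<a" "j<p" "i<m" "d<b" "k<q" for c j i d k
  proof -
    have "R (c,j,i) d k = R (c,j,i) d 0" by (rule s1[OF r])
    also have "\<dots> = R (c,j,i) 0 0" by (rule s2[OF r(1-4)])
    finally show ?thesis unfolding \<rho>_def by simp
  qed
  have eq2: "T c + q * \<rho> (c,j,i) = (K + G1 c j) + 1 * \<rho> (c,j,i)"
    if r: "c<a" "j<p" "i<m" for c j i
  proof -
    have e: "T c + U (c,j,i) 0 = K + G1 c j + R (c,j,i) 0 0" by (rule eq[OF r b0(1,2)])
    have u: "U (c,j,i) 0 = q * R (c,j,i) 0 0" by (rule U1[OF r b0(1)])
    have "R (c,j,i) 0 0 = \<rho> (c,j,i)" by (simp add: \<rho>_def)
    then show ?thesis using e u by simp
  qed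
  have s3: "\<rho> (c,j,i) = \<rho> (c,j,0)" if r: "c<a" "j<p" "i<m" for c j i
    by (rule lin_eq[OF b0(5) eq2[OF r] eq2[OF r(1,2) b0(3)]])
  have G1r: "G1 c j = m*(b*(q*\<rho> (c,j,0)))" if r: "c<a" "j<p" for c j
  proof -
    have RR: "R (c,j,i) d k = \<rho> (c,j,0)" if "i<m" "d<b" "k<q" for i d k
      using Rr[OF r that] s3[OF r that(1)] by simp
    have "G1 c j = (\<Sum>i<m. \<Sum>d<b. \<Sum>k<q. \<rho> (c,j,0))"
      unfolding G1_def by (simp add: RR)
    then show ?thesis by simp
  qed
  have eq3: "T c + q * \<rho> (c,j,0) = K + (m*(b*q)+1) * \<rho> (c,j,0)" if r: "c<a" "j<p" for c j
  proof -
    have e: "T c + q * \<rho> (c,j,0) = (K + G1 c j) + 1 * \<rho> (c,j,0)" by (rule eq2[OF r b0(3)])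
    have "(K + G1 c j) + 1 * \<rho> (c,j,0) = K + (m*(b*q)+1) * \<rho> (c,j,0)"
      unfolding G1r[OF r] by (simp add: algebra_simps)
    then show ?thesis using e by simp
  qed
  have mbq: "q \<noteq> m*(b*q)+1"
  proof -
    have h1: "2*q \<le> m*q" using assms by simp
    have h2: "m*q \<le> m*(b*q)" using assms by simp
    show ?thesis using h1 h2 by linarith
  qed
  have s4: "\<rho> (c,j,0) = \<rho> (c,0,0)" if r: "c<a" "j<p" for c j
    by (rule lin_eq[OF mbq eq3[OF r] eq3[OF r(1) b0(4)]])
  have Tr: "T c = p*(m*(b*(q*\<rho> (c,0,0))))" if r: "c<a" for c
  proof -
    have GG: "G1 c j = m*(b*(q*\<rho> (c,0,0)))" if "j<p" for j
      using G1r[OF r that] s4[OF r that] by simp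
    have "T c = (\<Sum>j<p. m*(b*(q*\<rho> (c,0,0))))"
      unfolding T_def by (simp add: GG)
    then show ?thesis by simp
  qed
  have eq4: "0 + (p*(m*(b*q)) + q) * \<rho> (c,0,0) = K + (m*(b*q)+1) * \<rho> (c,0,0)" if r: "c<a" for c
  proof -
    have e: "T c + q * \<rho> (c,0,0) = K + (m*(b*q)+1) * \<rho> (c,0,0)" by (rule eq3[OF r b0(4)])
    have "T c + q * \<rho> (c,0,0) = 0 + (p*(m*(b*q)) + q) * \<rho> (c,0,0)"
      unfolding Tr[OF r] by (simp add: algebra_simps)
    then show ?thesis using e by simp
  qed
  have pmbq: "p*(m*(b*q)) + q \<noteq> m*(b*q)+1"
  proof -
    have h1: "2*(m*(b*q)) \<le> p*(m*(b*q))" using assms by simp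
    show ?thesis using h1 assms by linarith
  qed
  have a0: "0 < a" using assms by simp
  have s5: "\<rho> (c,0,0) = \<rho> (0,0,0)" if r: "c<a" for c
    by (rule lin_eq[OF pmbq eq4[OF r] eq4[OF a0]])
  have Rall: "R (c,j,i) d k = \<rho> (0,0,0)"
    if r: "c<a" "j<p" "i<m" "d<b" "k<q" for c j i d k
  proof -
    have "R (c,j,i) d k = \<rho> (c,j,i)" by (rule Rr[OF r])
    also have "\<dots> = \<rho> (c,j,0)" by (rule s3[OF r(1-3)])
    also have "\<dots> = \<rho> (c,0,0)" by (rule s4[OF r(1,2)])
    also have "\<dots> = \<rho> (0,0,0)" by (rule s5[OF r(1)])
    finally show ?thesis .
  qed
  let ?A = "a*p*m*b*q"
  let ?N = "card ?V"
  have cV: "?N = ?A * n" unfolding V_eq by (simp add: card_cartesian_product)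
  have "sum f ?V = (\<Sum>g\<in>{..<a} \<times> ({..<p} \<times> {..<m}). \<Sum>d<b. \<Sum>k<q. R g d k)"
    unfolding V_eq R_def blk_def by (simp add: sum_times)
  also have "\<dots> = (\<Sum>g\<in>{..<a} \<times> ({..<p} \<times> {..<m}). \<Sum>d<b. \<Sum>k<q. \<rho> (0,0,0))"
    by (rule sum.cong) (auto simp: Rall)
  also have "\<dots> = ?A * \<rho> (0,0,0)" by (simp add: card_cartesian_product)
  finally have s_a: "sum f ?V = ?A * \<rho> (0,0,0)" .
  have "sum f ?V = sum id {1..?N}"
    using sum.reindex_bij_betw[OF bij, of id] by simp
  then have "2 * sum f ?V = ?N * (?N + 1)"
    using double_gauss_sum_from_Suc_0[where 'a=nat, of ?N] by simp
  then have "2 * (?A * \<rho> (0,0,0)) = ?A * (n * (?N + 1))" using s_a cV by (simp add: algebra_simps)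
  moreover have "?A > 0" using assms by simp
  ultimately have key: "2 * \<rho> (0,0,0) = n * (?N + 1)" by simp
  show ?thesis
  proof (rule ccontr)
    assume "\<not> ?thesis"
    then have "odd n" "even (?A * n)" by (auto simp: algebra_simps)
    then have "odd (n * (?N + 1))" using cV by simp
    with key show False by (metis dvd_triv_left)
  qed
qed

theorem theorem13:
  fixes a b m n p q :: nat
  assumes "a \<ge> 1" "b \<ge> 1" "m > 1" "n > 1" "p > 1" "q > 1"
  shows "distance_magic
           (lex_verts (copies_verts a (Hverts m p)) (copies_verts b (Hverts n q)))
           (lex_edge (copies_edge Hedge) (copies_edge Hedge))
         \<longleftrightarrow> even n \<or> odd (m * n * a * b * p * q)"
proof
  assume "distance_magic
           (lex_verts (copies_verts a (Hverts m p)) (copies_verts b (Hverts n q)))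
           (lex_edge (copies_edge Hedge) (copies_edge Hedge))"
  from nec[OF assms(5,6,3,1,2) this] show "even n \<or> odd (m * n * a * b * p * q)"
    by (simp add: ac_simps)
next
  assume "even n \<or> odd (m * n * a * b * p * q)"
  then have "even n \<or> odd (a*p*m*b*q)" by auto
  moreover have "2 \<le> n" using assms by simp
  ultimately show "distance_magic
           (lex_verts (copies_verts a (Hverts m p)) (copies_verts b (Hverts n q)))
           (lex_edge (copies_edge Hedge) (copies_edge Hedge))" by (rule suff)
qed

end
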